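(* Let $0<\alpha<1$ and $p,q>0$. If $\lambda_1(\widetilde{SG}_{\alpha,p}(A,B))\le\lambda_1(\mathcal{A}_{\alpha,q}(A,B))$ holds for all positive definite $2\times2$ matrices $A,B$, then $q/p\ge1-\alpha$. Hence, if $\widetilde{SG}_{\alpha,p}(A,B)\prec_w\mathcal{A}_{\alpha,q}(A,B)$ for all positive definite $2\times2$ matrices $A,B$, then $q/p\ge1-\alpha$.
   Context: For positive definite $A,B$: $A\#_\alpha B:=A^{1/2}(A^{-1/2}BA^{-1/2})^\alpha A^{1/2}$; $\widetilde F_\alpha(A,B):=(A^{-1}\#_\alpha B)^{1/2}A^{2(1-\alpha)}(A^{-1}\#_\alpha B)^{1/2}$; $\widetilde{SG}_{\alpha,p}(A,B):=\widetilde F_\alpha(A^p,B^p)^{1/p}$; $\mathcal{A}_{\alpha,q}(A,B):=((1-\alpha)A^q+\alpha B^q)^{1/q}$. For an $n\times n$ positive semidefinite $X$, $\lambda_1(X)\ge\dots\ge\lambda_n(X)$ are its eigenvalues in decreasing order with multiplicities; $X\prec_wY$ means $\sum_{i=1}^k\lambda_i(X)\le\sum_{i=1}^k\lambda_i(Y)$ for $1\le k\le n$. *)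

theory Defs
  imports Complex_Main "Jordan_Normal_Form.Jordan_Normal_Form" "Jordan_Normal_Form.Schur_Decomposition"
begin

definition hermitian_mat :: "complex mat \<Rightarrow> bool" where
  "hermitian_mat A \<longleftrightarrow> A \<in> carrier_mat (dim_row A) (dim_row A) \<and> mat_adjoint A = A"

definition pos_def_mat :: "complex mat \<Rightarrow> bool" where
  "pos_def_mat A \<longleftrightarrow> hermitian_mat A \<and>
     (\<forall>v \<in> carrier_vec (dim_row A). v \<noteq> 0\<^sub>v (dim_row A) \<longrightarrow> Re ((A *\<^sub>v v) \<bullet>c v) > 0)"

definition mat_rpow :: "complex mat \<Rightarrow> real \<Rightarrow> complex mat" where
  "mat_rpow A r = (let n = dim_row A;
     (U, d) = (SOME (U, d). U \<in> carrier_mat n n \<and> U * mat_adjoint U = 1\<^sub>m n \<and>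
        A = U * mat_diag n (\<lambda>i. complex_of_real (d i)) * mat_adjoint U)
     in U * mat_diag n (\<lambda>i. complex_of_real (d i powr r)) * mat_adjoint U)"

definition mat_gmean :: "real \<Rightarrow> complex mat \<Rightarrow> complex mat \<Rightarrow> complex mat" where
  "mat_gmean \<alpha> A B = mat_rpow A (1/2) *
     mat_rpow (mat_rpow A (-1/2) * B * mat_rpow A (-1/2)) \<alpha> * mat_rpow A (1/2)"

definition F_tilde :: "real \<Rightarrow> complex mat \<Rightarrow> complex mat \<Rightarrow> complex mat" where
  "F_tilde \<alpha> A B = (let G = mat_gmean \<alpha> (mat_rpow A (-1)) B in
     mat_rpow G (1/2) * mat_rpow A (2 * (1 - \<alpha>)) * mat_rpow G (1/2))"

definition SG_tilde :: "real \<Rightarrow> real \<Rightarrow> complex mat \<Rightarrow> complex mat \<Rightarrow> complex mat" where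
  "SG_tilde \<alpha> p A B = mat_rpow (F_tilde \<alpha> (mat_rpow A p) (mat_rpow B p)) (1/p)"

definition mat_pmean :: "real \<Rightarrow> real \<Rightarrow> complex mat \<Rightarrow> complex mat \<Rightarrow> complex mat" where
  "mat_pmean \<alpha> q A B =
     mat_rpow (complex_of_real (1 - \<alpha>) \<cdot>\<^sub>m mat_rpow A q + complex_of_real \<alpha> \<cdot>\<^sub>m mat_rpow B q) (1/q)"

text \<open>Eigenvalues with algebraic multiplicities (roots of the characteristic polynomial),
  real parts listed in decreasing order; eig k A is lambda_k(A) for 1 \<le> k \<le> n.\<close>
definition eig_mset :: "complex mat \<Rightarrow> complex multiset" where
  "eig_mset A = Abs_multiset (\<lambda>a. Polynomial.order a (char_poly A))"

definition eig :: "nat \<Rightarrow> complex mat \<Rightarrow> real" where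
  "eig k A = rev (sorted_list_of_multiset (image_mset Re (eig_mset A))) ! (k - 1)"

definition weak_maj :: "complex mat \<Rightarrow> complex mat \<Rightarrow> bool" where
  "weak_maj X Y \<longleftrightarrow> (\<forall>k \<in> {1..dim_row X}. (\<Sum>i=1..k. eig i X) \<le> (\<Sum>i=1..k. eig i Y))"

end

theory Submission
  imports Defs
begin

definition m2 :: "complex \<Rightarrow> complex \<Rightarrow> complex \<Rightarrow> complex \<Rightarrow> complex mat" where
  "m2 a b c d = mat 2 2 (\<lambda>(i,j). if i = 0 then (if j = 0 then a else b) else (if j = 0 then c else d))"

lemma m2_carrier[simp]: "m2 a b c d \<in> carrier_mat 2 2"
  by (simp add: m2_def)
lemma m2_dims[simp]: "dim_row (m2 a b c d) = 2" "dim_col (m2 a b c d) = 2"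
  by (simp_all add: m2_def)
lemma m2_index[simp]: "m2 a b c d $$ (0,0) = a" "m2 a b c d $$ (0,1) = b"
  "m2 a b c d $$ (1,0) = c" "m2 a b c d $$ (1,1) = d"
  "m2 a b c d $$ (0,Suc 0) = b" "m2 a b c d $$ (Suc 0,0) = c" "m2 a b c d $$ (Suc 0,Suc 0) = d"
  by (simp_all add: m2_def)

lemma less2: "(i::nat) < 2 \<longleftrightarrow> i = 0 \<or> i = 1" by auto

lemma m2_eqI: assumes "M \<in> carrier_mat 2 2" shows "M = m2 (M $$ (0,0)) (M $$ (0,1)) (M $$ (1,0)) (M $$ (1,1))"
  by (rule eq_matI) (use assms in \<open>auto simp: m2_def less2\<close>)


lemma sum2: "(\<Sum>i\<in>{0..<2::nat}. f i) = f 0 + f 1"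
  by (simp add: numeral_2_eq_2)

lemma m2_mult: "m2 a b c d * m2 e f g h = m2 (a*e+b*g) (a*f+b*h) (c*e+d*g) (c*f+d*h)"
  by (rule eq_matI) (auto simp: m2_def less2 scalar_prod_def sum2)

lemma m2_add: "m2 a b c d + m2 e f g h = m2 (a+e) (b+f) (c+g) (d+h)"
  by (rule eq_matI) (auto simp: m2_def less2)

lemma m2_smult: "k \<cdot>\<^sub>m m2 a b c d = m2 (k*a) (k*b) (k*c) (k*d)"
  by (rule eq_matI) (auto simp: m2_def less2)

lemma m2_one: "1\<^sub>m 2 = m2 1 0 0 1"
  by (rule eq_matI) (auto simp: m2_def less2)

lemma m2_diag: "mat_diag 2 f = m2 (f 0) 0 0 (f 1)"
  by (rule eq_matI) (auto simp: m2_def less2 mat_diag_def)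

lemma adjoint_dims[simp]: "dim_row (mat_adjoint A) = dim_col A" "dim_col (mat_adjoint A) = dim_row A"
  unfolding mat_adjoint_def by (simp_all add: mat_of_rows_def)

lemma adjoint_index[simp]: "i < dim_col A \<Longrightarrow> j < dim_row A \<Longrightarrow> mat_adjoint (A::complex mat) $$ (i,j) = cnj (A $$ (j,i))"
  unfolding mat_adjoint_def
  apply (subst mat_of_rows_index)
    apply simp
   apply simp
  apply simp
  done

lemma adjoint_carrier[simp]: "A \<in> carrier_mat n m \<Longrightarrow> mat_adjoint A \<in> carrier_mat m n"
  by (rule carrier_matI) (auto dest: carrier_matD)

lemma m2_adj: "mat_adjoint (m2 a b c d) = m2 (cnj a) (cnj c) (cnj b) (cnj d)"
  by (rule eq_matI) (auto simp: less2)

lemma unitary_left: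
  assumes "U \<in> carrier_mat n n" "U * mat_adjoint U = 1\<^sub>m n"
  shows "mat_adjoint U * U = 1\<^sub>m n"
  using mat_mult_left_right_inverse[OF assms(1) adjoint_carrier[OF assms(1)] assms(2)] .

lemma diag_conj_unique:
  fixes U V :: "complex mat" and d e :: "nat \<Rightarrow> real"
  assumes U: "U \<in> carrier_mat n n" and V: "V \<in> carrier_mat n n"
    and Uu: "U * mat_adjoint U = 1\<^sub>m n" and Vu: "V * mat_adjoint V = 1\<^sub>m n"
    and eq: "U * mat_diag n (\<lambda>i. complex_of_real (d i)) * mat_adjoint U
           = V * mat_diag n (\<lambda>i. complex_of_real (e i)) * mat_adjoint V"
  shows "U * mat_diag n (\<lambda>i. complex_of_real (f (d i))) * mat_adjoint U
       = V * mat_diag n (\<lambda>i. complex_of_real (f (e i))) * mat_adjoint V"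
proof -
  define D where "D = mat_diag n (\<lambda>i. complex_of_real (d i))"
  define E where "E = mat_diag n (\<lambda>i. complex_of_real (e i))"
  define Df where "Df = mat_diag n (\<lambda>i. complex_of_real (f (d i)))"
  define Ef where "Ef = mat_diag n (\<lambda>i. complex_of_real (f (e i)))"
  define Ua where "Ua = mat_adjoint U"
  define Va where "Va = mat_adjoint V"
  define W where "W = Ua * V"
  have Ua: "Ua \<in> carrier_mat n n" and Va: "Va \<in> carrier_mat n n" using U V by (auto simp: Ua_def Va_def)
  have D: "D \<in> carrier_mat n n" "E \<in> carrier_mat n n" "Df \<in> carrier_mat n n" "Ef \<in> carrier_mat n n"
    by (auto simp: D_def E_def Df_def Ef_def)
  have W: "W \<in> carrier_mat n n" using Ua V by (auto simp: W_def)
  have UU: "Ua * U = 1\<^sub>m n" using unitary_left[OF U Uu] by (simp add: Ua_def)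
  have VV: "Va * V = 1\<^sub>m n" using unitary_left[OF V Vu] by (simp add: Va_def)
  have Uu': "U * Ua = 1\<^sub>m n" using Uu by (simp add: Ua_def)
  have Vu': "V * Va = 1\<^sub>m n" using Vu by (simp add: Va_def)
  have eq': "U * D * Ua = V * E * Va" using eq by (simp add: D_def E_def Ua_def Va_def)
  have "D * W = (Ua * U) * D * (Ua * V)" using D UU by (simp add: W_def)
  also have "\<dots> = Ua * (U * D * Ua) * V"
    using U Ua V D by (simp add: assoc_mult_mat[of _ n n _ n _ n])
  also have "\<dots> = Ua * (V * E * Va) * V" by (simp add: eq')
  also have "\<dots> = (Ua * V) * E * (Va * V)"
    using U Ua V Va D by (simp add: assoc_mult_mat[of _ n n _ n _ n])
  also have "\<dots> = W * E" using VV W D by (simp add: W_def)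
  finally have DW: "D * W = W * E" .
  have DfW: "Df * W = W * Ef"
  proof (rule eq_matI)
    fix i j assume ij: "i < dim_row (W * Ef)" "j < dim_col (W * Ef)"
    hence i: "i < n" and j: "j < n" using W D by auto
    have "(D * W) $$ (i,j) = (W * E) $$ (i,j)" using DW by simp
    hence "complex_of_real (d i) * W $$ (i,j) = W $$ (i,j) * complex_of_real (e j)"
      unfolding D_def E_def using mat_diag_mult_left[OF W] mat_diag_mult_right[OF W] i j by simp
    hence "W $$ (i,j) = 0 \<or> d i = e j" by (auto simp: mult.commute)
    hence "complex_of_real (f (d i)) * W $$ (i,j) = W $$ (i,j) * complex_of_real (f (e j))" by auto
    thus "(Df * W) $$ (i,j) = (W * Ef) $$ (i,j)"
      unfolding Df_def Ef_def using mat_diag_mult_left[OF W] mat_diag_mult_right[OF W] i j by simp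
  qed (use W D in auto)
  have "U * Df * Ua = U * Df * Ua * (V * Va)" using U Ua D Vu' by simp
  also have "\<dots> = U * (Df * W) * Va"
    using U Ua V Va D by (simp add: W_def assoc_mult_mat[of _ n n _ n _ n])
  also have "\<dots> = U * (W * Ef) * Va" by (simp add: DfW)
  also have "\<dots> = (U * Ua) * V * Ef * Va"
    using U Ua V Va D by (simp add: W_def assoc_mult_mat[of _ n n _ n _ n])
  also have "\<dots> = V * Ef * Va" using Uu' V by simp
  finally show ?thesis by (simp add: Df_def Ef_def Ua_def Va_def)
qed

lemma mat_rpow_eq:
  fixes U :: "complex mat" and d :: "nat \<Rightarrow> real"
  assumes U: "U \<in> carrier_mat n n" and Uu: "U * mat_adjoint U = 1\<^sub>m n"
    and A: "A = U * mat_diag n (\<lambda>i. complex_of_real (d i)) * mat_adjoint U"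
  shows "mat_rpow A r = U * mat_diag n (\<lambda>i. complex_of_real (d i powr r)) * mat_adjoint U"
proof -
  have nA: "dim_row A = n" using A U by simp
  define P where "P = (\<lambda>(U::complex mat, d::nat \<Rightarrow> real). U \<in> carrier_mat n n \<and> U * mat_adjoint U = 1\<^sub>m n \<and>
        A = U * mat_diag n (\<lambda>i. complex_of_real (d i)) * mat_adjoint U)"
  have ex: "\<exists>x. P x" using assms unfolding P_def by (intro exI[of _ "(U,d)"]) auto
  obtain V e where Ve: "(SOME x. P x) = (V, e)" by (cases "SOME x. P x") auto
  have PVe: "P (V, e)" using someI_ex[OF ex] Ve by simp
  hence V: "V \<in> carrier_mat n n" "V * mat_adjoint V = 1\<^sub>m n"
    "A = V * mat_diag n (\<lambda>i. complex_of_real (e i)) * mat_adjoint V" unfolding P_def by auto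
  have "mat_rpow A r = V * mat_diag n (\<lambda>i. complex_of_real (e i powr r)) * mat_adjoint V"
    unfolding mat_rpow_def Let_def nA using Ve unfolding P_def by simp
  also have "\<dots> = U * mat_diag n (\<lambda>i. complex_of_real (d i powr r)) * mat_adjoint U"
    using diag_conj_unique[OF V(1) U V(2) Uu, of e d "\<lambda>x. x powr r"] V(3) A by simp
  finally show ?thesis .
qed

definition rm2 :: "real \<Rightarrow> real \<Rightarrow> real \<Rightarrow> real \<Rightarrow> complex mat" where
  "rm2 a b c d = m2 (of_real a) (of_real b) (of_real c) (of_real d)"

lemma rm2_carrier[simp]: "rm2 a b c d \<in> carrier_mat 2 2" and rm2_dims[simp]: "dim_row (rm2 a b c d) = 2" "dim_col (rm2 a b c d) = 2"
  by (simp_all add: rm2_def)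

lemma rm2_mult: "rm2 a b c d * rm2 e f g h = rm2 (a*e+b*g) (a*f+b*h) (c*e+d*g) (c*f+d*h)"
  by (simp add: rm2_def m2_mult)

lemma rm2_adj: "mat_adjoint (rm2 a b c d) = rm2 a c b d"
  by (simp add: rm2_def m2_adj)

lemma rm2_add: "rm2 a b c d + rm2 e f g h = rm2 (a+e) (b+f) (c+g) (d+h)"
  by (simp add: rm2_def m2_add)

lemma rm2_smult: "complex_of_real k \<cdot>\<^sub>m rm2 a b c d = rm2 (k*a) (k*b) (k*c) (k*d)"
  by (simp add: rm2_def m2_smult)

lemma rm2_one: "1\<^sub>m 2 = rm2 1 0 0 1"
  by (simp add: rm2_def m2_one)

lemma rm2_diag: "mat_diag 2 (\<lambda>i. complex_of_real (d i)) = rm2 (d 0) 0 0 (d 1)"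
  by (simp add: rm2_def m2_diag)

lemma rm2_inj: "rm2 a b c d = rm2 a' b' c' d' \<longleftrightarrow> a = a' \<and> b = b' \<and> c = c' \<and> d = d'"
proof
  assume "rm2 a b c d = rm2 a' b' c' d'"
  hence "rm2 a b c d $$ (0,0) = rm2 a' b' c' d' $$ (0,0)" "rm2 a b c d $$ (0,1) = rm2 a' b' c' d' $$ (0,1)"
    "rm2 a b c d $$ (1,0) = rm2 a' b' c' d' $$ (1,0)" "rm2 a b c d $$ (1,1) = rm2 a' b' c' d' $$ (1,1)" by auto
  thus "a = a' \<and> b = b' \<and> c = c' \<and> d = d'" unfolding rm2_def m2_index by simp
qed simp

definition Qm :: "real \<Rightarrow> real \<Rightarrow> real \<Rightarrow> complex mat" where
  "Qm c s e = rm2 (c*c + s*s*e) (c*s - c*s*e) (c*s - c*s*e) (s*s + c*c*e)"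

lemma Q_decomp:
  assumes "c*c + s*s = 1"
  shows "rm2 c (-s) s c * mat_adjoint (rm2 c (-s) s c) = 1\<^sub>m 2"
    "Qm c s e = rm2 c (-s) s c * mat_diag 2 (\<lambda>i. complex_of_real (if i = 0 then 1 else e)) * mat_adjoint (rm2 c (-s) s c)"
  using assms by (simp_all add: rm2_adj rm2_mult rm2_diag rm2_one Qm_def algebra_simps)

lemma Q_rpow:
  assumes "c*c + s*s = 1"
  shows "mat_rpow (Qm c s e) r = Qm c s (e powr r)"
proof -
  have "mat_rpow (Qm c s e) r = rm2 c (-s) s c * mat_diag 2 (\<lambda>i. complex_of_real ((if i = 0 then 1 else e) powr r)) * mat_adjoint (rm2 c (-s) s c)"
    by (rule mat_rpow_eq[OF rm2_carrier Q_decomp(1)[OF assms] Q_decomp(2)[OF assms]])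
  also have "\<dots> = Qm c s (e powr r)" using assms
    by (simp add: rm2_adj rm2_mult rm2_diag Qm_def algebra_simps)
  finally show ?thesis .
qed

definition lp :: "real \<Rightarrow> real \<Rightarrow> real \<Rightarrow> real" where
  "lp a b c = (a+c)/2 + sqrt (((a-c)/2)^2 + b^2)"
definition lm :: "real \<Rightarrow> real \<Rightarrow> real \<Rightarrow> real" where
  "lm a b c = (a+c)/2 - sqrt (((a-c)/2)^2 + b^2)"

lemma lp_lm_sum: "lp a b c + lm a b c = a + c" by (simp add: lp_def lm_def)
lemma lp_lm_prod: "lp a b c * lm a b c = a * c - b * b"
proof -
  have "lp a b c * lm a b c = ((a+c)/2)^2 - (sqrt (((a-c)/2)^2 + b^2))^2"
    by (simp add: lp_def lm_def power2_eq_square algebra_simps)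
  also have "(sqrt (((a-c)/2)^2 + b^2))^2 = ((a-c)/2)^2 + b^2" by (rule real_sqrt_pow2) simp
  also have "((a+c)/2)^2 - (((a-c)/2)^2 + b^2) = a * c - b * b" by (simp add: power2_eq_square field_simps)
  finally show ?thesis .
qed
lemma lm_le_lp: "lm a b c \<le> lp a b c" by (simp add: lp_def lm_def)

lemma lm_pos: assumes "a + c > 0" "a * c - b * b > 0" shows "lm a b c > 0"
proof -
  have "((a-c)/2)^2 + b^2 = ((a+c)/2)^2 - (a*c - b*b)" by (simp add: power2_eq_square field_simps)
  hence "((a-c)/2)^2 + b^2 < ((a+c)/2)^2" using assms(2) by linarith
  hence "sqrt (((a-c)/2)^2 + b^2) < sqrt (((a+c)/2)^2)" by (rule real_sqrt_less_mono)
  also have "\<dots> = (a+c)/2" using assms(1) by simp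
  finally show ?thesis by (simp add: lm_def)
qed

lemma lp_ne_lm: assumes "b \<noteq> 0" shows "lp a b c \<noteq> lm a b c"
proof -
  have "b^2 > 0" using assms by simp
  hence "((a-c)/2)^2 + b^2 > 0" by (simp add: add_nonneg_pos)
  hence "sqrt (((a-c)/2)^2 + b^2) > 0" by simp
  thus ?thesis unfolding lp_def lm_def by linarith
qed

lemma sm_decomp:
  "\<exists>U. U \<in> carrier_mat 2 2 \<and> U * mat_adjoint U = 1\<^sub>m 2 \<and>
     rm2 a b b c = U * mat_diag 2 (\<lambda>i. complex_of_real (if i = 0 then lp a b c else lm a b c)) * mat_adjoint U"
proof (cases "b = 0")
  case True
  show ?thesis
  proof (cases "a \<ge> c")
    case ac: True
    have "sqrt (((a-c)/2)^2) = (a-c)/2" using ac by simp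
    hence "lp a b c = a" "lm a b c = c" using True by (simp_all add: lp_def lm_def field_simps)
    thus ?thesis using True
      by (intro exI[of _ "rm2 1 0 0 1"]) (simp add: rm2_adj rm2_mult rm2_diag rm2_one)
  next
    case ac: False
    have "sqrt (((a-c)/2)^2) = (c-a)/2" using ac by (subst real_sqrt_abs, subst abs_of_neg) (auto simp: field_simps)
    hence "lp a b c = c" "lm a b c = a" using True by (simp_all add: lp_def lm_def field_simps)
    thus ?thesis using True
      by (intro exI[of _ "rm2 0 1 1 0"]) (simp add: rm2_adj rm2_mult rm2_diag rm2_one)
  qed
next
  case False
  define l where "l = lp a b c"
  define m where "m = lm a b c"
  define n where "n = sqrt (b*b + (l-a)*(l-a))"
  have nn: "n * n = b*b + (l-a)*(l-a)" unfolding n_def by (simp add: add_nonneg_nonneg)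
  have "b*b > 0" using False not_real_square_gt_zero by blast
  hence "n*n > 0" using nn by (simp add: add_pos_nonneg)
  hence n0: "n \<noteq> 0" by auto
  have sum: "l + m = a + c" and prod: "l * m = a*c - b*b" unfolding l_def m_def using lp_lm_sum lp_lm_prod by auto
  have mdef: "m = a + c - l" using sum by simp
  have key: "b*b = (l-a)*(l-c)" using prod unfolding mdef by (simp add: algebra_simps)
  define U where "U = rm2 (b/n) (-(l-a)/n) ((l-a)/n) (b/n)"
  have "U * mat_adjoint U = 1\<^sub>m 2"
    unfolding U_def rm2_adj rm2_mult rm2_one rm2_inj using n0 nn
    by (simp add: field_simps)
  moreover have "rm2 a b b c = U * mat_diag 2 (\<lambda>i. complex_of_real (if i = 0 then l else m)) * mat_adjoint U"
  proof -
    have "b*b*l + (l-a)*(l-a)*m - a * (n*n) = (l-a)*(b*b - (l-a)*(l-c))" unfolding nn mdef by (simp add: algebra_simps)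
    hence e1: "b*b*l + (l-a)*(l-a)*m = a * (n*n)" using key by simp
    have "b*(l-a)*(l-m) - b * (n*n) = b*((l-a)*(l-c) - b*b)" unfolding nn mdef by (simp add: algebra_simps)
    hence e2: "b*(l-a)*(l-m) = b * (n*n)" using key by simp
    have "(l-a)*(l-a)*l + b*b*m - c * (n*n) = (l-a)*((l-a)*(l-c) - b*b)" unfolding nn mdef by (simp add: algebra_simps)
    hence e3: "(l-a)*(l-a)*l + b*b*m = c * (n*n)" using key by simp
    have f1: "b/n*l*(b/n) + (-(l-a)/n)*m*(-(l-a)/n) = a" using e1 n0 by (simp add: field_simps)
    have "b/n*l*((l-a)/n) + (-(l-a)/n)*m*(b/n) = (b*(l-a)*(l-m))/(n*n)" using n0 by (simp add: field_simps)
    hence f2: "b/n*l*((l-a)/n) + (-(l-a)/n)*m*(b/n) = b" using e2 n0 by simp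
    have "(l-a)/n*l*(b/n) + b/n*m*(-(l-a)/n) = b/n*l*((l-a)/n) + (-(l-a)/n)*m*(b/n)" using n0 by (simp add: field_simps)
    hence f3: "(l-a)/n*l*(b/n) + b/n*m*(-(l-a)/n) = b" using f2 by simp
    have f4: "(l-a)/n*l*((l-a)/n) + b/n*m*(b/n) = c" using e3 n0 by (simp add: field_simps)
    show ?thesis unfolding U_def rm2_diag rm2_adj rm2_mult rm2_inj using f1 f2 f3 f4 by simp
  qed
  ultimately show ?thesis unfolding l_def m_def by (intro exI[of _ U]) (simp add: U_def)
qed

lemma m2_lin_identity:
  "m2 u1 u2 u3 u4 * m2 (p0 + p1*x) 0 0 (p0 + p1*y) * m2 v1 v2 v3 v4
   = p0 \<cdot>\<^sub>m (m2 u1 u2 u3 u4 * m2 v1 v2 v3 v4) + p1 \<cdot>\<^sub>m (m2 u1 u2 u3 u4 * m2 x 0 0 y * m2 v1 v2 v3 v4)"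
  by (simp add: m2_mult m2_smult m2_add algebra_simps)

lemma lin_identity:
  assumes U: "U \<in> carrier_mat 2 2"
  shows "U * mat_diag 2 (\<lambda>i. complex_of_real (if i = 0 then k0 + k1 * x else k0 + k1 * y)) * mat_adjoint U
   = complex_of_real k0 \<cdot>\<^sub>m (U * mat_adjoint U) + complex_of_real k1 \<cdot>\<^sub>m (U * mat_diag 2 (\<lambda>i. complex_of_real (if i = 0 then x else y)) * mat_adjoint U)"
proof -
  obtain u1 u2 u3 u4 where Ue: "U = m2 u1 u2 u3 u4" using m2_eqI[OF U] by blast
  show ?thesis unfolding Ue m2_adj m2_diag using m2_lin_identity[of u1 u2 u3 u4 "complex_of_real k0" "complex_of_real k1" "complex_of_real x" "complex_of_real y"]
    by simp
qed

lemma sm_rpow_U: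
  obtains U where "U \<in> carrier_mat 2 2" "U * mat_adjoint U = 1\<^sub>m 2"
     "rm2 a b b c = U * mat_diag 2 (\<lambda>i. complex_of_real (if i = 0 then lp a b c else lm a b c)) * mat_adjoint U"
     "\<And>r. mat_rpow (rm2 a b b c) r = U * mat_diag 2 (\<lambda>i. complex_of_real (if i = 0 then lp a b c powr r else lm a b c powr r)) * mat_adjoint U"
proof -
  obtain U where U: "U \<in> carrier_mat 2 2" "U * mat_adjoint U = 1\<^sub>m 2"
     "rm2 a b b c = U * mat_diag 2 (\<lambda>i. complex_of_real (if i = 0 then lp a b c else lm a b c)) * mat_adjoint U"
    using sm_decomp by blast
  have "mat_rpow (rm2 a b b c) r = U * mat_diag 2 (\<lambda>i. complex_of_real (if i = 0 then lp a b c powr r else lm a b c powr r)) * mat_adjoint U" for r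
  proof -
    have "mat_rpow (rm2 a b b c) r = U * mat_diag 2 (\<lambda>i. complex_of_real ((if i = 0 then lp a b c else lm a b c) powr r)) * mat_adjoint U"
      by (rule mat_rpow_eq[OF U(1,2,3)])
    also have "(\<lambda>i. complex_of_real ((if i = 0 then lp a b c else lm a b c) powr r)) = (\<lambda>i. complex_of_real (if i = 0 then lp a b c powr r else lm a b c powr r))"
      by (rule ext) simp
    finally show ?thesis .
  qed
  thus ?thesis using U that by blast
qed

definition kc1 :: "real \<Rightarrow> real \<Rightarrow> real \<Rightarrow> real \<Rightarrow> real" where
  "kc1 r a b c = (lp a b c powr r - lm a b c powr r) / (lp a b c - lm a b c)"
definition kc0 :: "real \<Rightarrow> real \<Rightarrow> real \<Rightarrow> real \<Rightarrow> real" where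
  "kc0 r a b c = (lp a b c * lm a b c powr r - lm a b c * lp a b c powr r) / (lp a b c - lm a b c)"

lemma sm_rpow:
  assumes "b \<noteq> 0"
  shows "mat_rpow (rm2 a b b c) r = rm2 (kc0 r a b c + kc1 r a b c * a) (kc1 r a b c * b) (kc1 r a b c * b) (kc0 r a b c + kc1 r a b c * c)"
proof -
  obtain U where U: "U \<in> carrier_mat 2 2" "U * mat_adjoint U = 1\<^sub>m 2"
     "rm2 a b b c = U * mat_diag 2 (\<lambda>i. complex_of_real (if i = 0 then lp a b c else lm a b c)) * mat_adjoint U"
     "\<And>r. mat_rpow (rm2 a b b c) r = U * mat_diag 2 (\<lambda>i. complex_of_real (if i = 0 then lp a b c powr r else lm a b c powr r)) * mat_adjoint U"
    using sm_rpow_U[of a b c] by blast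
  have ne: "lp a b c - lm a b c \<noteq> 0" using lp_ne_lm[OF assms] by simp
  have aux1: "x = (l*y - m*x)/(l-m) + (x-y)/(l-m)*l" if "l - m \<noteq> 0" for l m x y :: real
  proof -
    have "(l*y - m*x)/(l-m) + (x-y)/(l-m)*l = ((l*y - m*x) + (x-y)*l)/(l-m)" by (simp add: add_divide_distrib)
    also have "(l*y - m*x) + (x-y)*l = x*(l-m)" by (simp add: algebra_simps)
    finally show ?thesis using that by simp
  qed
  have aux2: "y = (l*y - m*x)/(l-m) + (x-y)/(l-m)*m" if "l - m \<noteq> 0" for l m x y :: real
  proof -
    have "(l*y - m*x)/(l-m) + (x-y)/(l-m)*m = ((l*y - m*x) + (x-y)*m)/(l-m)" by (simp add: add_divide_distrib)
    also have "(l*y - m*x) + (x-y)*m = y*(l-m)" by (simp add: algebra_simps)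
    finally show ?thesis using that by simp
  qed
  have e1: "lp a b c powr r = kc0 r a b c + kc1 r a b c * lp a b c"
    unfolding kc0_def kc1_def by (rule aux1[OF ne])
  have e2: "lm a b c powr r = kc0 r a b c + kc1 r a b c * lm a b c"
    unfolding kc0_def kc1_def by (rule aux2[OF ne])
  have "mat_rpow (rm2 a b b c) r = U * mat_diag 2 (\<lambda>i. complex_of_real (if i = 0 then kc0 r a b c + kc1 r a b c * lp a b c else kc0 r a b c + kc1 r a b c * lm a b c)) * mat_adjoint U"
    unfolding U(4) e1 e2 ..
  also have "\<dots> = complex_of_real (kc0 r a b c) \<cdot>\<^sub>m (U * mat_adjoint U) + complex_of_real (kc1 r a b c) \<cdot>\<^sub>m (rm2 a b b c)"
    unfolding U(3) by (rule lin_identity[OF U(1)])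
  also have "\<dots> = rm2 (kc0 r a b c + kc1 r a b c * a) (kc1 r a b c * b) (kc1 r a b c * b) (kc0 r a b c + kc1 r a b c * c)"
    unfolding U(2) rm2_one rm2_smult rm2_add by simp
  finally show ?thesis .
qed

lemma sm_sqrt:
  assumes "lm a b c \<ge> 0"
  shows "mat_rpow (rm2 a b b c) (1/2) * mat_rpow (rm2 a b b c) (1/2) = rm2 a b b c"
proof -
  obtain U where U: "U \<in> carrier_mat 2 2" "U * mat_adjoint U = 1\<^sub>m 2"
     "rm2 a b b c = U * mat_diag 2 (\<lambda>i. complex_of_real (if i = 0 then lp a b c else lm a b c)) * mat_adjoint U"
     "\<And>r. mat_rpow (rm2 a b b c) r = U * mat_diag 2 (\<lambda>i. complex_of_real (if i = 0 then lp a b c powr r else lm a b c powr r)) * mat_adjoint U"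
    using sm_rpow_U[of a b c] by blast
  have lp0: "lp a b c \<ge> 0" using assms lm_le_lp[of a b c] by linarith
  define D where "D = mat_diag 2 (\<lambda>i. complex_of_real (if i = 0 then lp a b c powr (1/2) else lm a b c powr (1/2)))"
  define Ua where "Ua = mat_adjoint U"
  have D: "D \<in> carrier_mat 2 2" by (simp add: D_def)
  have Ua: "Ua \<in> carrier_mat 2 2" using U(1) by (simp add: Ua_def)
  have UU: "Ua * U = 1\<^sub>m 2" using unitary_left[OF U(1,2)] by (simp add: Ua_def)
  have DD: "D * D = mat_diag 2 (\<lambda>i. complex_of_real (if i = 0 then lp a b c else lm a b c))"
    unfolding D_def mat_diag_diag using lp0 assms
    by (intro arg_cong[where f="mat_diag 2"]) (auto simp: powr_add[symmetric] simp flip: of_real_mult)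
  have R: "mat_rpow (rm2 a b b c) (1/2) = U * D * Ua" unfolding U(4) D_def Ua_def ..
  have "mat_rpow (rm2 a b b c) (1/2) * mat_rpow (rm2 a b b c) (1/2) = U * D * Ua * (U * D * Ua)" unfolding R ..
  also have "\<dots> = U * D * (Ua * U) * D * Ua"
    using U(1) D Ua by (simp add: assoc_mult_mat[of _ 2 2 _ 2 _ 2])
  also have "\<dots> = U * (D * D) * Ua" using U(1) D Ua UU by (simp add: assoc_mult_mat[of _ 2 2 _ 2 _ 2])
  also have "\<dots> = rm2 a b b c" unfolding DD Ua_def using U(3) by simp
  finally show ?thesis .
qed

lemma eig_decomp:
  assumes U: "U \<in> carrier_mat 2 2" "U * mat_adjoint U = 1\<^sub>m 2"
  shows "eig 1 (U * mat_diag 2 (\<lambda>i. complex_of_real (d i)) * mat_adjoint U) = max (d 0) (d 1)"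
proof -
  let ?D = "mat_diag 2 (\<lambda>i. complex_of_real (d i))"
  have sim: "similar_mat (U * ?D * mat_adjoint U) ?D"
    by (rule similar_matI[where n=2 and P=U and Q="mat_adjoint U"]) (use U unitary_left[OF U] in auto)
  have ut: "upper_triangular ?D" by (auto simp: upper_triangular_def mat_diag_def)
  have "char_poly ?D = (\<Prod>a\<leftarrow>diag_mat ?D. [:- a, 1:])"
    by (rule char_poly_upper_triangular[OF mat_diag_dim ut])
  also have "diag_mat ?D = [complex_of_real (d 0), complex_of_real (d 1)]"
    by (simp add: diag_mat_def mat_diag_def upt_conv_Cons numeral_2_eq_2)
  finally have cp: "char_poly (U * ?D * mat_adjoint U) = [:- complex_of_real (d 0), 1:] * [:- complex_of_real (d 1), 1:]"
    using char_poly_similar[OF sim] by simp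
  have ord1: "Polynomial.order x [:- y, 1:] = (if x = y then 1 else 0)" for x y :: complex
  proof (cases "x = y")
    case True thus ?thesis using order_power_n_n[of x 1] by simp
  next
    case False thus ?thesis by (auto intro!: order_0I)
  qed
  have "eig_mset (U * ?D * mat_adjoint U) = {# complex_of_real (d 0), complex_of_real (d 1) #}"
  proof -
    have "(\<lambda>a. Polynomial.order a (char_poly (U * ?D * mat_adjoint U))) = count {# complex_of_real (d 0), complex_of_real (d 1) #}"
      unfolding cp by (rule ext) (subst order_mult, simp, simp add: ord1)
    thus ?thesis unfolding eig_mset_def by (simp add: count_inverse)
  qed
  hence "image_mset Re (eig_mset (U * ?D * mat_adjoint U)) = {# d 0, d 1 #}" by simp
  thus ?thesis unfolding eig_def by (cases "d 0 \<le> d 1") (auto simp: max_def)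
qed

lemma eig_sm_rpow:
  assumes "lm a b c \<ge> 0" "r > 0"
  shows "eig 1 (mat_rpow (rm2 a b b c) r) = lp a b c powr r"
proof -
  obtain U where U: "U \<in> carrier_mat 2 2" "U * mat_adjoint U = 1\<^sub>m 2"
     "rm2 a b b c = U * mat_diag 2 (\<lambda>i. complex_of_real (if i = 0 then lp a b c else lm a b c)) * mat_adjoint U"
     "\<And>r. mat_rpow (rm2 a b b c) r = U * mat_diag 2 (\<lambda>i. complex_of_real (if i = 0 then lp a b c powr r else lm a b c powr r)) * mat_adjoint U"
    using sm_rpow_U[of a b c] by blast
  have "eig 1 (mat_rpow (rm2 a b b c) r) = max (lp a b c powr r) (lm a b c powr r)"
    unfolding U(4) using eig_decomp[OF U(1,2), of "\<lambda>i. if i = 0 then lp a b c powr r else lm a b c powr r"] by simp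
  also have "\<dots> = lp a b c powr r"
  proof -
    have "lm a b c powr r \<le> lp a b c powr r" by (rule powr_mono2) (use assms lm_le_lp[of a b c] in auto)
    thus ?thesis by (simp add: max_def)
  qed
  finally show ?thesis .
qed

lemma dim_sm_rpow: "dim_row (mat_rpow (rm2 a b b c) r) = 2"
proof -
  obtain U where U: "U \<in> carrier_mat 2 2" "U * mat_adjoint U = 1\<^sub>m 2"
     "rm2 a b b c = U * mat_diag 2 (\<lambda>i. complex_of_real (if i = 0 then lp a b c else lm a b c)) * mat_adjoint U"
     "\<And>r. mat_rpow (rm2 a b b c) r = U * mat_diag 2 (\<lambda>i. complex_of_real (if i = 0 then lp a b c powr r else lm a b c powr r)) * mat_adjoint U"
    using sm_rpow_U[of a b c] by blast
  show ?thesis unfolding U(4) using U(1) by simp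
qed

lemma quad_pos:
  fixes a b c x y :: real
  assumes "a > 0" "a * c - b * b > 0" "x \<noteq> 0 \<or> y \<noteq> 0"
  shows "a*x*x + 2*b*x*y + c*y*y > 0"
proof -
  have e: "a * (a*x*x + 2*b*x*y + c*y*y) = (a*x + b*y)^2 + (a*c - b*b)*y^2"
    by (simp add: power2_eq_square algebra_simps)
  have "(a*x + b*y)^2 + (a*c - b*b)*y^2 > 0"
  proof (cases "y = 0")
    case True thus ?thesis using assms by simp
  next
    case False
    hence "(a*c - b*b)*y^2 > 0" using assms by simp
    thus ?thesis by (simp add: add_nonneg_pos)
  qed
  hence "a * (a*x*x + 2*b*x*y + c*y*y) > 0" using e by simp
  thus ?thesis using assms(1) by (simp add: zero_less_mult_iff)
qed

lemma quad_nonneg: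
  fixes a b c x y :: real
  assumes "a > 0" "a * c - b * b > 0"
  shows "a*x*x + 2*b*x*y + c*y*y \<ge> 0"
  using quad_pos[OF assms, of x y] by (cases "x = 0 \<and> y = 0") auto

lemma pos_def_rm2:
  assumes "a > 0" "a * c - b * b > 0"
  shows "pos_def_mat (rm2 a b b c)"
  unfolding pos_def_mat_def hermitian_mat_def
proof (intro conjI ballI impI)
  show "rm2 a b b c \<in> carrier_mat (dim_row (rm2 a b b c)) (dim_row (rm2 a b b c))" by simp
  show "mat_adjoint (rm2 a b b c) = rm2 a b b c" by (simp add: rm2_adj)
  fix v :: "complex vec" assume v: "v \<in> carrier_vec (dim_row (rm2 a b b c))" and nz: "v \<noteq> 0\<^sub>v (dim_row (rm2 a b b c))"
  have v2: "dim_vec v = 2" using v by simp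
  have xy: "v $ 0 \<noteq> 0 \<or> v $ 1 \<noteq> 0"
  proof (rule ccontr)
    assume "\<not> ?thesis"
    hence "v = 0\<^sub>v 2" using v2 by (intro eq_vecI) (auto simp: less2)
    thus False using nz by simp
  qed
  define x1 where "x1 = Re (v $ 0)"
  define x2 where "x2 = Im (v $ 0)"
  define y1 where "y1 = Re (v $ 1)"
  define y2 where "y2 = Im (v $ 1)"
  have "x1 \<noteq> 0 \<or> y1 \<noteq> 0 \<or> x2 \<noteq> 0 \<or> y2 \<noteq> 0" using xy unfolding x1_def x2_def y1_def y2_def
    by (auto simp: complex_eq_iff)
  hence pos: "(a*x1*x1 + 2*b*x1*y1 + c*y1*y1) + (a*x2*x2 + 2*b*x2*y2 + c*y2*y2) > 0"
    using quad_pos[OF assms] quad_nonneg[OF assms] by (meson add_nonneg_pos add_pos_nonneg)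
  have "Re ((rm2 a b b c *\<^sub>v v) \<bullet>c v) = (a*x1*x1 + 2*b*x1*y1 + c*y1*y1) + (a*x2*x2 + 2*b*x2*y2 + c*y2*y2)"
    using v2 unfolding x1_def x2_def y1_def y2_def
    by (simp add: scalar_prod_def mult_mat_vec_def sum2 rm2_def m2_def row_def algebra_simps)
  thus "Re ((rm2 a b b c *\<^sub>v v) \<bullet>c v) > 0" using pos by simp
qed

lemma kc_eq:
  assumes "b \<noteq> 0"
  shows "kc0 r a b c + kc1 r a b c * lp a b c = lp a b c powr r"
    "kc0 r a b c + kc1 r a b c * lm a b c = lm a b c powr r"
proof -
  have ne: "lp a b c - lm a b c \<noteq> 0" using lp_ne_lm[OF assms] by simp
  have aux1: "x = (l*y - m*x)/(l-m) + (x-y)/(l-m)*l" if "l - m \<noteq> 0" for l m x y :: real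
  proof -
    have "(l*y - m*x)/(l-m) + (x-y)/(l-m)*l = ((l*y - m*x) + (x-y)*l)/(l-m)" by (simp add: add_divide_distrib)
    also have "(l*y - m*x) + (x-y)*l = x*(l-m)" by (simp add: algebra_simps)
    finally show ?thesis using that by simp
  qed
  have aux2: "y = (l*y - m*x)/(l-m) + (x-y)/(l-m)*m" if "l - m \<noteq> 0" for l m x y :: real
  proof -
    have "(l*y - m*x)/(l-m) + (x-y)/(l-m)*m = ((l*y - m*x) + (x-y)*m)/(l-m)" by (simp add: add_divide_distrib)
    also have "(l*y - m*x) + (x-y)*m = y*(l-m)" by (simp add: algebra_simps)
    finally show ?thesis using that by simp
  qed
  show "kc0 r a b c + kc1 r a b c * lp a b c = lp a b c powr r"
    unfolding kc0_def kc1_def by (rule aux1[OF ne, symmetric])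
  show "kc0 r a b c + kc1 r a b c * lm a b c = lm a b c powr r"
    unfolding kc0_def kc1_def by (rule aux2[OF ne, symmetric])
qed

lemma kc1_pos:
  assumes "b \<noteq> 0" "lm a b c \<ge> 0" "r > 0"
  shows "kc1 r a b c > 0"
proof -
  have lt: "lm a b c < lp a b c" using lp_ne_lm[OF assms(1), of a c] lm_le_lp[of a b c] by linarith
  have "lm a b c powr r < lp a b c powr r" by (rule powr_less_mono2) (use assms lt in auto)
  thus ?thesis unfolding kc1_def using lt by (simp add: divide_pos_pos)
qed

lemma lm_le_a: "lm a b c \<le> a" and lm_le_c: "lm a b c \<le> c"
proof -
  have h: "\<bar>(a-c)/2\<bar> \<le> sqrt (((a-c)/2)^2 + b^2)"
    by (metis le_add_same_cancel1 real_sqrt_abs real_sqrt_le_mono zero_le_power2)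
  have L: "m - S \<le> m + d" "m - S \<le> m - d" if "\<bar>d\<bar> \<le> S" for m d S :: real
    using that by (auto simp: abs_le_iff)
  have e1: "(a+c)/2 + (a-c)/2 = a" by (simp add: field_simps)
  have e2: "(a+c)/2 - (a-c)/2 = c" by (simp add: field_simps)
  show "lm a b c \<le> a" unfolding lm_def using L(1)[OF h, of "(a+c)/2"] e1 by simp
  show "lm a b c \<le> c" unfolding lm_def using L(2)[OF h, of "(a+c)/2"] e2 by simp
qed

definition Y1 :: "real \<Rightarrow> real \<Rightarrow> real \<Rightarrow> real" where "Y1 c s d = c*c + s*s*d"
definition Y2 :: "real \<Rightarrow> real \<Rightarrow> real \<Rightarrow> real" where "Y2 c s d = c*s - c*s*d"
definition Y3 :: "real \<Rightarrow> real \<Rightarrow> real \<Rightarrow> real" where "Y3 c s d = s*s + c*c*d"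
definition Mb :: "real \<Rightarrow> real \<Rightarrow> real \<Rightarrow> real" where "Mb c s d = sqrt d * Y2 c s d"
definition Mc :: "real \<Rightarrow> real \<Rightarrow> real \<Rightarrow> real" where "Mc c s d = d * Y3 c s d"
definition K0 :: "real \<Rightarrow> real \<Rightarrow> real \<Rightarrow> real \<Rightarrow> real" where "K0 \<alpha> c s d = kc0 \<alpha> (Y1 c s d) (Mb c s d) (Mc c s d)"
definition K1 :: "real \<Rightarrow> real \<Rightarrow> real \<Rightarrow> real \<Rightarrow> real" where "K1 \<alpha> c s d = kc1 \<alpha> (Y1 c s d) (Mb c s d) (Mc c s d)"
definition G1 :: "real \<Rightarrow> real \<Rightarrow> real \<Rightarrow> real \<Rightarrow> real" where "G1 \<alpha> c s d = K0 \<alpha> c s d + K1 \<alpha> c s d * Y1 c s d"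
definition G2 :: "real \<Rightarrow> real \<Rightarrow> real \<Rightarrow> real \<Rightarrow> real" where "G2 \<alpha> c s d = K1 \<alpha> c s d * Y2 c s d"
definition G3 :: "real \<Rightarrow> real \<Rightarrow> real \<Rightarrow> real \<Rightarrow> real" where "G3 \<alpha> c s d = K0 \<alpha> c s d / d + K1 \<alpha> c s d * Y3 c s d"
definition TT :: "real \<Rightarrow> real \<Rightarrow> real \<Rightarrow> real \<Rightarrow> real" where "TT \<alpha> c s d = G1 \<alpha> c s d + d powr (2*(1-\<alpha>)) * G3 \<alpha> c s d"
definition DD :: "real \<Rightarrow> real \<Rightarrow> real \<Rightarrow> real \<Rightarrow> real" where "DD \<alpha> c s d = d powr (2*(1-\<alpha>)) * (G1 \<alpha> c s d * G3 \<alpha> c s d - G2 \<alpha> c s d * G2 \<alpha> c s d)"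
definition Phi :: "real \<Rightarrow> real \<Rightarrow> real \<Rightarrow> real \<Rightarrow> real" where "Phi \<alpha> c s d = TT \<alpha> c s d / 2 + sqrt ((TT \<alpha> c s d)^2 / 4 - DD \<alpha> c s d)"
definition N1 :: "real \<Rightarrow> real \<Rightarrow> real \<Rightarrow> real \<Rightarrow> real" where "N1 \<alpha> c s z = (1-\<alpha>) + \<alpha> * (c*c + s*s*z)"
definition N2 :: "real \<Rightarrow> real \<Rightarrow> real \<Rightarrow> real \<Rightarrow> real" where "N2 \<alpha> c s z = \<alpha> * (c*s - c*s*z)"
definition N3 :: "real \<Rightarrow> real \<Rightarrow> real \<Rightarrow> real \<Rightarrow> real" where "N3 \<alpha> c s z = (1-\<alpha>) * z + \<alpha> * (s*s + c*c*z)"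
definition Psi :: "real \<Rightarrow> real \<Rightarrow> real \<Rightarrow> real \<Rightarrow> real" where "Psi \<alpha> c s z = lp (N1 \<alpha> c s z) (N2 \<alpha> c s z) (N3 \<alpha> c s z)"

lemma Qm_eq: "Qm c s d = rm2 (Y1 c s d) (Y2 c s d) (Y2 c s d) (Y3 c s d)"
  by (simp add: Qm_def Y1_def Y2_def Y3_def)

lemma Qm_diag: "Qm 1 0 d = rm2 1 0 0 d"
  by (simp add: Qm_def)

lemma lp_alt: "lp a b c = (a+c)/2 + sqrt ((a+c)^2/4 - (a*c - b*b))"
proof -
  have "((a-c)/2)^2 + b^2 = (a+c)^2/4 - (a*c - b*b)" by (simp add: power2_eq_square field_simps)
  thus ?thesis unfolding lp_def by simp
qed

lemma Y_det_gen: assumes "c*c + s*s = 1" shows "Y1 c s z * Y3 c s z - Y2 c s z * Y2 c s z = z"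
proof -
  have "Y1 c s z * Y3 c s z - Y2 c s z * Y2 c s z = z * (c*c + s*s) * (c*c + s*s)"
    by (simp add: Y1_def Y2_def Y3_def algebra_simps)
  thus ?thesis using assms by simp
qed

lemma N_lm:
  assumes "0 < \<alpha>" "\<alpha> < 1" "c > 0" "s > 0" "c*c + s*s = 1" "z > 0"
  shows "lm (N1 \<alpha> c s z) (N2 \<alpha> c s z) (N3 \<alpha> c s z) > 0"
proof (rule lm_pos)
  have Y: "Y1 c s z > 0" "Y3 c s z > 0" using assms by (simp_all add: Y1_def Y3_def add_pos_nonneg add_nonneg_pos)
  have N: "N1 \<alpha> c s z = (1-\<alpha>) + \<alpha> * Y1 c s z" "N2 \<alpha> c s z = \<alpha> * Y2 c s z" "N3 \<alpha> c s z = (1-\<alpha>)*z + \<alpha> * Y3 c s z"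
    by (simp_all add: N1_def N2_def N3_def Y1_def Y2_def Y3_def)
  show "N1 \<alpha> c s z + N3 \<alpha> c s z > 0" unfolding N using assms Y by (simp add: add_pos_pos)
  have "N1 \<alpha> c s z * N3 \<alpha> c s z - N2 \<alpha> c s z * N2 \<alpha> c s z
     = (1-\<alpha>)*(1-\<alpha>)*z + (1-\<alpha>)*\<alpha>*(Y3 c s z + z * Y1 c s z) + \<alpha>*\<alpha>*(Y1 c s z * Y3 c s z - Y2 c s z * Y2 c s z)"
    unfolding N by (simp add: algebra_simps)
  also have "\<dots> = (1-\<alpha>)*(1-\<alpha>)*z + (1-\<alpha>)*\<alpha>*(Y3 c s z + z * Y1 c s z) + \<alpha>*\<alpha>*z"
    using Y_det_gen[OF assms(5)] by simp
  finally show "N1 \<alpha> c s z * N3 \<alpha> c s z - N2 \<alpha> c s z * N2 \<alpha> c s z > 0"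
    using assms Y by (simp add: add_pos_pos)
qed

context
  fixes \<alpha> c s d :: real
  assumes \<alpha>0: "0 < \<alpha>" and \<alpha>1: "\<alpha> < 1" and c0: "c > 0" and s0: "s > 0" and cs: "c*c + s*s = 1"
    and d0: "0 < d" and d1: "d < 1"
begin

lemma Y_pos: "Y1 c s d > 0" "Y2 c s d > 0" "Y3 c s d > 0"
  using c0 s0 d0 d1 by (simp_all add: Y1_def Y2_def Y3_def add_pos_nonneg add_nonneg_pos)

lemma Y_det: "Y1 c s d * Y3 c s d - Y2 c s d * Y2 c s d = d"
proof -
  have "Y1 c s d * Y3 c s d - Y2 c s d * Y2 c s d = d * (c*c + s*s) * (c*c + s*s)"
    by (simp add: Y1_def Y2_def Y3_def algebra_simps)
  thus ?thesis using cs by simp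
qed

lemma Mb_ne: "Mb c s d \<noteq> 0" using Y_pos d0 by (simp add: Mb_def)

lemma M_lm: "lm (Y1 c s d) (Mb c s d) (Mc c s d) > 0"
proof (rule lm_pos)
  show "Y1 c s d + Mc c s d > 0" using Y_pos d0 by (simp add: Mc_def add_pos_pos)
  have "Y1 c s d * Mc c s d - Mb c s d * Mb c s d = d * (Y1 c s d * Y3 c s d - Y2 c s d * Y2 c s d)"
    using d0 by (simp add: Mb_def Mc_def algebra_simps)
  also have "\<dots> = d * d" by (simp add: Y_det)
  finally show "Y1 c s d * Mc c s d - Mb c s d * Mb c s d > 0" using d0 by simp
qed

lemma M_prod: "lp (Y1 c s d) (Mb c s d) (Mc c s d) * lm (Y1 c s d) (Mb c s d) (Mc c s d) = d * d"
proof -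
  have "lp (Y1 c s d) (Mb c s d) (Mc c s d) * lm (Y1 c s d) (Mb c s d) (Mc c s d) = Y1 c s d * Mc c s d - Mb c s d * Mb c s d" by (rule lp_lm_prod)
  also have "\<dots> = d * (Y1 c s d * Y3 c s d - Y2 c s d * Y2 c s d)"
    using d0 by (simp add: Mb_def Mc_def algebra_simps)
  finally show ?thesis by (simp add: Y_det)
qed

lemma M_lp_pos: "lp (Y1 c s d) (Mb c s d) (Mc c s d) > 0" using M_lm lm_le_lp by (smt (verit))

lemma xG3_eq: "d powr (2*(1-\<alpha>)) * G3 \<alpha> c s d =
   (lp (Y1 c s d) (Mb c s d) (Mc c s d) * (d / lp (Y1 c s d) (Mb c s d) (Mc c s d) powr \<alpha>)
    - d powr (3 - 2*\<alpha>) / lp (Y1 c s d) (Mb c s d) (Mc c s d) * lp (Y1 c s d) (Mb c s d) (Mc c s d) powr \<alpha>)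
   / (lp (Y1 c s d) (Mb c s d) (Mc c s d) - lm (Y1 c s d) (Mb c s d) (Mc c s d))
   + d powr (2*(1-\<alpha>)) * K1 \<alpha> c s d * Y3 c s d"
proof -
  define l where "l = lp (Y1 c s d) (Mb c s d) (Mc c s d)"
  define m where "m = lm (Y1 c s d) (Mb c s d) (Mc c s d)"
  define x where "x = d powr (2*(1-\<alpha>))"
  have l0: "l > 0" using M_lp_pos by (simp add: l_def)
  have mdef: "m = d * d / l" using M_prod l0 unfolding l_def m_def by (simp add: field_simps)
  have m1: "x / d * m powr \<alpha> = d / l powr \<alpha>"
  proof -
    have "m powr \<alpha> = d powr \<alpha> * d powr \<alpha> / l powr \<alpha>" unfolding mdef using d0 l0
      by (simp add: powr_divide powr_mult)
    hence "x / d * m powr \<alpha> = (x * d powr \<alpha> * d powr \<alpha> / d) / l powr \<alpha>" by simp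
    also have "x * d powr \<alpha> * d powr \<alpha> = d powr 2" unfolding x_def using d0 by (simp add: powr_add[symmetric])
    also have "d powr 2 / d = d" using d0 by (simp add: power2_eq_square)
    finally show ?thesis .
  qed
  have m2: "x / d * m = d powr (3 - 2*\<alpha>) / l"
  proof -
    have "x / d * m = x * d / l" unfolding mdef using d0 by simp
    also have "x * d = d powr (3 - 2*\<alpha>)"
    proof -
      have "x * d = d powr (2*(1-\<alpha>)) * d powr 1" unfolding x_def using d0 by simp
      also have "\<dots> = d powr (2*(1-\<alpha>) + 1)" by (rule powr_add[symmetric])
      also have "2*(1-\<alpha>) + 1 = 3 - 2*\<alpha>" by simp
      finally show ?thesis .
    qed
    finally show ?thesis .
  qed
  have "x * G3 \<alpha> c s d = x / d * K0 \<alpha> c s d + x * K1 \<alpha> c s d * Y3 c s d"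
    unfolding G3_def by (simp add: algebra_simps)
  also have "x / d * K0 \<alpha> c s d = (l * (x / d * m powr \<alpha>) - (x / d * m) * l powr \<alpha>) / (l - m)"
    unfolding K0_def kc0_def l_def[symmetric] m_def[symmetric] by (simp add: algebra_simps diff_divide_distrib)
  finally have "x * G3 \<alpha> c s d = (l * (x / d * m powr \<alpha>) - (x / d * m) * l powr \<alpha>) / (l - m) + x * K1 \<alpha> c s d * Y3 c s d" .
  hence "x * G3 \<alpha> c s d = (l * (d / l powr \<alpha>) - d powr (3 - 2*\<alpha>) / l * l powr \<alpha>) / (l - m) + x * K1 \<alpha> c s d * Y3 c s d"
    unfolding m1 m2 .
  thus ?thesis unfolding x_def l_def m_def .
qed

lemma K1_pos: "K1 \<alpha> c s d > 0"
  unfolding K1_def using kc1_pos[OF Mb_ne _ \<alpha>0] M_lm by simp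

lemma G1_pos: "G1 \<alpha> c s d > 0"
proof -
  have "G1 \<alpha> c s d \<ge> K0 \<alpha> c s d + K1 \<alpha> c s d * lm (Y1 c s d) (Mb c s d) (Mc c s d)"
    unfolding G1_def using K1_pos lm_le_a by (simp add: mult_left_mono)
  also have "K0 \<alpha> c s d + K1 \<alpha> c s d * lm (Y1 c s d) (Mb c s d) (Mc c s d) = lm (Y1 c s d) (Mb c s d) (Mc c s d) powr \<alpha>"
    unfolding K0_def K1_def by (rule kc_eq(2)[OF Mb_ne])
  finally show ?thesis using M_lm by (smt (verit) powr_gt_zero)
qed

lemma G_det: "G1 \<alpha> c s d * G3 \<alpha> c s d - G2 \<alpha> c s d * G2 \<alpha> c s d
   = lp (Y1 c s d) (Mb c s d) (Mc c s d) powr \<alpha> * lm (Y1 c s d) (Mb c s d) (Mc c s d) powr \<alpha> / d"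
proof -
  define l where "l = lp (Y1 c s d) (Mb c s d) (Mc c s d)"
  define m where "m = lm (Y1 c s d) (Mb c s d) (Mc c s d)"
  define k0 where "k0 = K0 \<alpha> c s d"
  define k1 where "k1 = K1 \<alpha> c s d"
  have sum: "l + m = Y1 c s d + d * Y3 c s d" unfolding l_def m_def lp_lm_sum Mc_def ..
  have "l * m = Y1 c s d * Mc c s d - Mb c s d * Mb c s d" unfolding l_def m_def by (rule lp_lm_prod)
  also have "\<dots> = d * (Y1 c s d * Y3 c s d - Y2 c s d * Y2 c s d)"
    using d0 by (simp add: Mb_def Mc_def algebra_simps)
  finally have prod: "l * m = d * d" by (simp add: Y_det)
  have e1: "k0 + k1 * l = l powr \<alpha>" unfolding k0_def k1_def l_def K0_def K1_def by (rule kc_eq(1)[OF Mb_ne])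
  have e2: "k0 + k1 * m = m powr \<alpha>" unfolding k0_def k1_def m_def K0_def K1_def by (rule kc_eq(2)[OF Mb_ne])
  have "d * (G1 \<alpha> c s d * G3 \<alpha> c s d - G2 \<alpha> c s d * G2 \<alpha> c s d)
      = k0*k0 + k0*k1*(Y1 c s d + d * Y3 c s d) + k1*k1*(d * (Y1 c s d * Y3 c s d - Y2 c s d * Y2 c s d))"
    unfolding G1_def G2_def G3_def k0_def[symmetric] k1_def[symmetric] using d0 by (simp add: field_simps)
  also have "\<dots> = k0*k0 + k0*k1*(l+m) + k1*k1*(l*m)" unfolding sum prod Y_det by simp
  also have "\<dots> = (k0 + k1 * l) * (k0 + k1 * m)" by (simp add: algebra_simps)
  finally have "d * (G1 \<alpha> c s d * G3 \<alpha> c s d - G2 \<alpha> c s d * G2 \<alpha> c s d) = l powr \<alpha> * m powr \<alpha>"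
    unfolding e1 e2 .
  thus ?thesis unfolding l_def[symmetric] m_def[symmetric] using d0 by (simp add: field_simps)
qed

lemma G_det_pos: "G1 \<alpha> c s d * G3 \<alpha> c s d - G2 \<alpha> c s d * G2 \<alpha> c s d > 0"
  unfolding G_det using M_lm lm_le_lp d0
  by (smt (verit) divide_pos_pos mult_pos_pos powr_gt_zero)

lemma G3_pos: "G3 \<alpha> c s d > 0"
proof -
  have "G1 \<alpha> c s d * G3 \<alpha> c s d > 0" using G_det_pos by (smt (verit) zero_le_square)
  thus ?thesis using G1_pos by (simp add: zero_less_mult_iff)
qed

lemma G2_ne: "G2 \<alpha> c s d \<noteq> 0" using K1_pos Y_pos by (simp add: G2_def)

lemma G_lm: "lm (G1 \<alpha> c s d) (G2 \<alpha> c s d) (G3 \<alpha> c s d) > 0"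
  by (rule lm_pos) (use G1_pos G3_pos G_det_pos in auto)

lemma TT_pos: "TT \<alpha> c s d > 0" unfolding TT_def using G1_pos G3_pos d0 by (simp add: add_pos_nonneg)
lemma DD_pos: "DD \<alpha> c s d > 0" unfolding DD_def using G_det_pos d0 by simp

lemma M_eq: "rm2 1 0 0 (sqrt d) * rm2 (Y1 c s d) (Y2 c s d) (Y2 c s d) (Y3 c s d) * rm2 1 0 0 (sqrt d)
   = rm2 (Y1 c s d) (Mb c s d) (Mb c s d) (Mc c s d)"
  unfolding rm2_mult rm2_inj using d0 by (simp add: Mb_def Mc_def algebra_simps)

lemma Gm_eq: "rm2 1 0 0 (1 / sqrt d) * mat_rpow (rm2 (Y1 c s d) (Mb c s d) (Mb c s d) (Mc c s d)) \<alpha> * rm2 1 0 0 (1 / sqrt d)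
   = rm2 (G1 \<alpha> c s d) (G2 \<alpha> c s d) (G2 \<alpha> c s d) (G3 \<alpha> c s d)"
  unfolding sm_rpow[OF Mb_ne] rm2_mult rm2_inj using d0
  by (simp add: G1_def G2_def G3_def K0_def K1_def Mb_def Mc_def field_simps)

lemma SG_eig:
  fixes p :: real assumes p0: "p > 0"
  shows "eig 1 (SG_tilde \<alpha> p (Qm 1 0 (d powr (1/p))) (Qm c s (d powr (1/p)))) = Phi \<alpha> c s d powr (1/p)"
    and "dim_row (SG_tilde \<alpha> p (Qm 1 0 (d powr (1/p))) (Qm c s (d powr (1/p)))) = 2"
proof -
  have c10: "1*1 + 0*0 = (1::real)" by simp
  have ep: "(d powr (1/p)) powr p = d" using p0 d0 by (simp add: powr_powr)
  have hA: "mat_rpow (Qm 1 0 (d powr (1/p))) p = Qm 1 0 d" unfolding Q_rpow[OF c10] ep ..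
  have hB: "mat_rpow (Qm c s (d powr (1/p))) p = Qm c s d" unfolding Q_rpow[OF cs] ep ..
  have inv: "mat_rpow (Qm 1 0 d) (-1) = Qm 1 0 (d powr -1)" by (rule Q_rpow[OF c10])
  have ph: "(d powr -1) powr (1/2) = 1 / sqrt d" using d0
    by (simp add: powr_powr powr_minus_divide powr_half_sqrt real_sqrt_divide)
  have mh: "(d powr -1) powr (-1/2) = sqrt d"
  proof -
    have "(d powr -1) powr (-1/2) = d powr (-1 * (-1/2))" by (rule powr_powr)
    also have "\<dots> = d powr (1/2)" by simp
    also have "\<dots> = sqrt d" using d0 by (simp add: powr_half_sqrt)
    finally show ?thesis .
  qed
  have P1: "mat_rpow (Qm 1 0 (d powr -1)) (1/2) = rm2 1 0 0 (1 / sqrt d)"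
    by (subst Q_rpow[OF c10]) (simp only: ph Qm_diag)
  have P2: "mat_rpow (Qm 1 0 (d powr -1)) (-1/2) = rm2 1 0 0 (sqrt d)"
    by (subst Q_rpow[OF c10]) (simp only: mh Qm_diag)
  have gm: "mat_gmean \<alpha> (mat_rpow (Qm 1 0 d) (-1)) (Qm c s d) = rm2 (G1 \<alpha> c s d) (G2 \<alpha> c s d) (G2 \<alpha> c s d) (G3 \<alpha> c s d)"
    unfolding mat_gmean_def inv P1 P2 Qm_eq[of c s d] M_eq Gm_eq ..
  define g1 where "g1 = G1 \<alpha> c s d"
  define g2 where "g2 = G2 \<alpha> c s d"
  define g3 where "g3 = G3 \<alpha> c s d"
  define s1 where "s1 = kc0 (1/2) g1 g2 g3 + kc1 (1/2) g1 g2 g3 * g1"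
  define s2 where "s2 = kc1 (1/2) g1 g2 g3 * g2"
  define s3 where "s3 = kc0 (1/2) g1 g2 g3 + kc1 (1/2) g1 g2 g3 * g3"
  define x where "x = d powr (2*(1-\<alpha>))"
  have S: "mat_rpow (rm2 g1 g2 g2 g3) (1/2) = rm2 s1 s2 s2 s3"
    unfolding s1_def s2_def s3_def g2_def by (rule sm_rpow[OF G2_ne])
  have SS: "rm2 s1 s2 s2 s3 * rm2 s1 s2 s2 s3 = rm2 g1 g2 g2 g3"
  proof -
    have "lm g1 g2 g3 \<ge> 0" using G_lm unfolding g1_def g2_def g3_def by simp
    from sm_sqrt[OF this] show ?thesis unfolding S .
  qed
  hence Seq: "s1*s1 + s2*s2 = g1" "s1*s2 + s2*s3 = g2" "s2*s2 + s3*s3 = g3"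
    unfolding rm2_mult rm2_inj by auto
  have X: "mat_rpow (Qm 1 0 d) (2*(1-\<alpha>)) = rm2 1 0 0 x"
    by (subst Q_rpow[OF c10]) (simp only: Qm_diag x_def)
  define f1 where "f1 = s1*s1 + x*s2*s2"
  define f2 where "f2 = s1*s2 + x*s2*s3"
  define f3 where "f3 = s2*s2 + x*s3*s3"
  have F: "F_tilde \<alpha> (Qm 1 0 d) (Qm c s d) = rm2 f1 f2 f2 f3"
    unfolding F_tilde_def Let_def gm g1_def[symmetric] g2_def[symmetric] g3_def[symmetric] S X
    unfolding rm2_mult rm2_inj f1_def f2_def f3_def by (simp add: algebra_simps)
  have tr: "f1 + f3 = TT \<alpha> c s d"
    unfolding TT_def f1_def f3_def x_def[symmetric] g1_def[symmetric] g3_def[symmetric] Seq(1)[symmetric] Seq(3)[symmetric]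
    by (simp add: algebra_simps)
  have det: "f1 * f3 - f2 * f2 = DD \<alpha> c s d"
    unfolding DD_def x_def[symmetric] g1_def[symmetric] g2_def[symmetric] g3_def[symmetric] Seq[symmetric] f1_def f2_def f3_def
    by (simp add: algebra_simps)
  have lmF: "lm f1 f2 f3 > 0" by (rule lm_pos) (use tr det TT_pos DD_pos in auto)
  have SG: "SG_tilde \<alpha> p (Qm 1 0 (d powr (1/p))) (Qm c s (d powr (1/p))) = mat_rpow (rm2 f1 f2 f2 f3) (1/p)"
    unfolding SG_tilde_def hA hB F ..
  have "lp f1 f2 f3 = Phi \<alpha> c s d" unfolding lp_alt Phi_def tr det ..
  thus "eig 1 (SG_tilde \<alpha> p (Qm 1 0 (d powr (1/p))) (Qm c s (d powr (1/p)))) = Phi \<alpha> c s d powr (1/p)"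
    unfolding SG using eig_sm_rpow[of f1 f2 f3 "1/p"] lmF p0 by simp
  show "dim_row (SG_tilde \<alpha> p (Qm 1 0 (d powr (1/p))) (Qm c s (d powr (1/p)))) = 2"
    unfolding SG by (rule dim_sm_rpow)
qed

lemma PM_eig:
  fixes p q :: real assumes p0: "p > 0" and q0: "q > 0"
  shows "eig 1 (mat_pmean \<alpha> q (Qm 1 0 (d powr (1/p))) (Qm c s (d powr (1/p)))) = Psi \<alpha> c s (d powr (q/p)) powr (1/q)"
proof -
  have c10: "1*1 + 0*0 = (1::real)" by simp
  define z where "z = d powr (q/p)"
  have z0: "z > 0" using d0 by (simp add: z_def)
  have ez: "(d powr (1/p)) powr q = z" unfolding z_def using d0 by (simp add: powr_powr)
  have hA: "mat_rpow (Qm 1 0 (d powr (1/p))) q = rm2 1 0 0 z" by (subst Q_rpow[OF c10]) (simp only: ez Qm_diag)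
  have hB: "mat_rpow (Qm c s (d powr (1/p))) q = Qm c s z" unfolding Q_rpow[OF cs] ez ..
  have sum: "complex_of_real (1 - \<alpha>) \<cdot>\<^sub>m rm2 1 0 0 z + complex_of_real \<alpha> \<cdot>\<^sub>m Qm c s z
      = rm2 (N1 \<alpha> c s z) (N2 \<alpha> c s z) (N2 \<alpha> c s z) (N3 \<alpha> c s z)"
    unfolding Qm_def rm2_smult rm2_add rm2_inj by (simp add: N1_def N2_def N3_def algebra_simps)
  have "mat_pmean \<alpha> q (Qm 1 0 (d powr (1/p))) (Qm c s (d powr (1/p))) = mat_rpow (rm2 (N1 \<alpha> c s z) (N2 \<alpha> c s z) (N2 \<alpha> c s z) (N3 \<alpha> c s z)) (1/q)"
    unfolding mat_pmean_def hA hB sum ..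
  moreover have "lm (N1 \<alpha> c s z) (N2 \<alpha> c s z) (N3 \<alpha> c s z) \<ge> 0"
    using N_lm[OF \<alpha>0 \<alpha>1 c0 s0 cs z0] by simp
  ultimately show ?thesis using eig_sm_rpow q0 unfolding Psi_def z_def by simp
qed

lemma AB_pd:
  fixes p :: real assumes p0: "p > 0"
  shows "pos_def_mat (Qm 1 0 (d powr (1/p)))" "pos_def_mat (Qm c s (d powr (1/p)))"
proof -
  have e0: "d powr (1/p) > 0" using d0 by simp
  show "pos_def_mat (Qm 1 0 (d powr (1/p)))" unfolding Qm_diag by (rule pos_def_rm2) (use e0 in auto)
  show "pos_def_mat (Qm c s (d powr (1/p)))" unfolding Qm_eq
    by (rule pos_def_rm2) (use e0 c0 Y_det_gen[OF cs, of "d powr (1/p)"] in \<open>auto simp: Y1_def add_pos_nonneg\<close>)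
qed

end

lemma ev01: "eventually (\<lambda>d::real. 0 < d \<and> d < 1) (at_right 0)"
  by (rule eventually_at_rightI[where a=0 and b=1]) auto

context
  fixes \<alpha> c s :: real
  assumes \<alpha>0: "0 < \<alpha>" and \<alpha>1: "\<alpha> < 1" and c0: "c > 0" and s0: "s > 0" and cs: "c*c + s*s = 1"
begin

lemma lim_Y: "((\<lambda>d. Y1 c s d) \<longlongrightarrow> c*c) (at_right 0)" "((\<lambda>d. Y2 c s d) \<longlongrightarrow> c*s) (at_right 0)"
   "((\<lambda>d. Y3 c s d) \<longlongrightarrow> s*s) (at_right 0)"
   "((\<lambda>d. Mb c s d) \<longlongrightarrow> 0) (at_right 0)" "((\<lambda>d. Mc c s d) \<longlongrightarrow> 0) (at_right 0)"
  unfolding Y1_def Y2_def Y3_def Mb_def Mc_def by (auto intro!: tendsto_eq_intros)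

lemma lim_lpM: "((\<lambda>d. lp (Y1 c s d) (Mb c s d) (Mc c s d)) \<longlongrightarrow> c*c) (at_right 0)"
proof -
  have "((\<lambda>d. lp (Y1 c s d) (Mb c s d) (Mc c s d)) \<longlongrightarrow> (c*c + 0)/2 + sqrt (((c*c - 0)/2)^2 + 0^2)) (at_right 0)"
    unfolding lp_def by (intro tendsto_intros lim_Y) simp_all
  moreover have "(c*c + 0)/2 + sqrt (((c*c - 0)/2)^2 + 0^2) = c*c" by simp
  ultimately show ?thesis by simp
qed

lemma lim_lmM: "((\<lambda>d. lm (Y1 c s d) (Mb c s d) (Mc c s d)) \<longlongrightarrow> 0) (at_right 0)"
proof -
  have "((\<lambda>d. lm (Y1 c s d) (Mb c s d) (Mc c s d)) \<longlongrightarrow> (c*c + 0)/2 - sqrt (((c*c - 0)/2)^2 + 0^2)) (at_right 0)"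
    unfolding lm_def by (intro tendsto_intros lim_Y) simp_all
  moreover have "(c*c + 0)/2 - sqrt (((c*c - 0)/2)^2 + 0^2) = 0" by simp
  ultimately show ?thesis by simp
qed

lemma ev_lm_nonneg: "eventually (\<lambda>d. lm (Y1 c s d) (Mb c s d) (Mc c s d) \<ge> 0) (at_right 0)"
  using ev01 by eventually_elim (use M_lm[OF \<alpha>0 \<alpha>1 c0 s0 cs] in \<open>auto intro: less_imp_le\<close>)

lemma lim_K: "((\<lambda>d. K1 \<alpha> c s d) \<longlongrightarrow> (c*c) powr \<alpha> / (c*c)) (at_right 0)"
    "((\<lambda>d. K0 \<alpha> c s d) \<longlongrightarrow> 0) (at_right 0)"
proof -
  have cc: "c*c \<noteq> 0" using c0 by simp
  have "((\<lambda>d. K1 \<alpha> c s d) \<longlongrightarrow> ((c*c) powr \<alpha> - 0 powr \<alpha>) / (c*c - 0)) (at_right 0)"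
    unfolding K1_def kc1_def
    by (intro tendsto_intros lim_lpM lim_lmM) (use cc \<alpha>0 ev_lm_nonneg in auto)
  thus "((\<lambda>d. K1 \<alpha> c s d) \<longlongrightarrow> (c*c) powr \<alpha> / (c*c)) (at_right 0)" by simp
  have "((\<lambda>d. K0 \<alpha> c s d) \<longlongrightarrow> ((c*c) * 0 powr \<alpha> - 0 * (c*c) powr \<alpha>) / (c*c - 0)) (at_right 0)"
    unfolding K0_def kc0_def
    by (intro tendsto_intros lim_lpM lim_lmM) (use cc \<alpha>0 ev_lm_nonneg in auto)
  thus "((\<lambda>d. K0 \<alpha> c s d) \<longlongrightarrow> 0) (at_right 0)" by simp
qed

lemma lim_G1: "((\<lambda>d. G1 \<alpha> c s d) \<longlongrightarrow> (c*c) powr \<alpha>) (at_right 0)"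
proof -
  have "((\<lambda>d. G1 \<alpha> c s d) \<longlongrightarrow> 0 + (c*c) powr \<alpha> / (c*c) * (c*c)) (at_right 0)"
    unfolding G1_def by (intro tendsto_intros lim_K lim_Y)
  thus ?thesis using c0 by simp
qed

lemma lim_G2: "((\<lambda>d. G2 \<alpha> c s d) \<longlongrightarrow> (c*c) powr \<alpha> / (c*c) * (c*s)) (at_right 0)"
  unfolding G2_def by (intro tendsto_intros lim_K lim_Y)

lemma lim_x: "((\<lambda>d::real. d powr (2*(1-\<alpha>))) \<longlongrightarrow> 0) (at_right 0)"
proof -
  have "((\<lambda>d::real. d powr (2*(1-\<alpha>))) \<longlongrightarrow> 0 powr (2*(1-\<alpha>))) (at_right 0)"
    by (intro tendsto_intros) (use \<alpha>1 eventually_at_right_less[of "0::real"] in \<open>auto elim: eventually_mono\<close>)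
  thus ?thesis by simp
qed

lemma lim_xG3: "((\<lambda>d. d powr (2*(1-\<alpha>)) * G3 \<alpha> c s d) \<longlongrightarrow> 0) (at_right 0)"
proof -
  have cc: "c*c \<noteq> 0" using c0 by simp
  have ccp: "(c*c) powr \<alpha> \<noteq> 0" using c0 by simp
  have ev: "eventually (\<lambda>d. d \<ge> 0) (at_right (0::real))" using eventually_at_right_less[of "0::real"] by (auto elim: eventually_mono)
  have "((\<lambda>d. (lp (Y1 c s d) (Mb c s d) (Mc c s d) * (d / lp (Y1 c s d) (Mb c s d) (Mc c s d) powr \<alpha>)
    - d powr (3 - 2*\<alpha>) / lp (Y1 c s d) (Mb c s d) (Mc c s d) * lp (Y1 c s d) (Mb c s d) (Mc c s d) powr \<alpha>)
   / (lp (Y1 c s d) (Mb c s d) (Mc c s d) - lm (Y1 c s d) (Mb c s d) (Mc c s d))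
   + d powr (2*(1-\<alpha>)) * K1 \<alpha> c s d * Y3 c s d) \<longlongrightarrow>
     ((c*c) * (0 / (c*c) powr \<alpha>) - 0 powr (3 - 2*\<alpha>) / (c*c) * (c*c) powr \<alpha>) / (c*c - 0)
      + 0 powr (2*(1-\<alpha>)) * ((c*c) powr \<alpha> / (c*c)) * (s*s)) (at_right 0)"
    by (intro tendsto_intros lim_lpM lim_lmM lim_K lim_Y) (use cc ccp \<alpha>0 \<alpha>1 ev in auto)
  moreover have "eventually (\<lambda>d. (lp (Y1 c s d) (Mb c s d) (Mc c s d) * (d / lp (Y1 c s d) (Mb c s d) (Mc c s d) powr \<alpha>)
    - d powr (3 - 2*\<alpha>) / lp (Y1 c s d) (Mb c s d) (Mc c s d) * lp (Y1 c s d) (Mb c s d) (Mc c s d) powr \<alpha>)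
   / (lp (Y1 c s d) (Mb c s d) (Mc c s d) - lm (Y1 c s d) (Mb c s d) (Mc c s d))
   + d powr (2*(1-\<alpha>)) * K1 \<alpha> c s d * Y3 c s d = d powr (2*(1-\<alpha>)) * G3 \<alpha> c s d) (at_right 0)"
    using ev01 by eventually_elim (use xG3_eq[OF \<alpha>0 \<alpha>1 c0 s0 cs] in auto)
  ultimately have "((\<lambda>d. d powr (2*(1-\<alpha>)) * G3 \<alpha> c s d) \<longlongrightarrow>
     ((c*c) * (0 / (c*c) powr \<alpha>) - 0 powr (3 - 2*\<alpha>) / (c*c) * (c*c) powr \<alpha>) / (c*c - 0)
      + 0 powr (2*(1-\<alpha>)) * ((c*c) powr \<alpha> / (c*c)) * (s*s)) (at_right 0)"
    by (rule Lim_transform_eventually)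
  thus ?thesis by simp
qed

lemma lim_Phi: "((\<lambda>d. Phi \<alpha> c s d) \<longlongrightarrow> (c*c) powr \<alpha>) (at_right 0)"
proof -
  have T: "((\<lambda>d. TT \<alpha> c s d) \<longlongrightarrow> (c*c) powr \<alpha> + 0) (at_right 0)"
    unfolding TT_def by (intro tendsto_intros lim_G1 lim_xG3)
  have "DD \<alpha> c s d = G1 \<alpha> c s d * (d powr (2*(1-\<alpha>)) * G3 \<alpha> c s d) - d powr (2*(1-\<alpha>)) * G2 \<alpha> c s d * G2 \<alpha> c s d" for d
    unfolding DD_def by (simp add: algebra_simps)
  hence D: "((\<lambda>d. DD \<alpha> c s d) \<longlongrightarrow> (c*c) powr \<alpha> * 0 - 0 * ((c*c) powr \<alpha> / (c*c) * (c*s)) * ((c*c) powr \<alpha> / (c*c) * (c*s))) (at_right 0)"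
    by (simp only:) (intro tendsto_intros lim_G1 lim_xG3 lim_x lim_G2)
  have "((\<lambda>d. Phi \<alpha> c s d) \<longlongrightarrow> ((c*c) powr \<alpha> + 0) / 2 + sqrt (((c*c) powr \<alpha> + 0)^2 / 4 - ((c*c) powr \<alpha> * 0 - 0 * ((c*c) powr \<alpha> / (c*c) * (c*s)) * ((c*c) powr \<alpha> / (c*c) * (c*s))))) (at_right 0)"
    unfolding Phi_def by (intro tendsto_intros T D) simp_all
  moreover have "((c*c) powr \<alpha> + 0) / 2 + sqrt (((c*c) powr \<alpha> + 0)^2 / 4 - ((c*c) powr \<alpha> * 0 - 0 * ((c*c) powr \<alpha> / (c*c) * (c*s)) * ((c*c) powr \<alpha> / (c*c) * (c*s)))) = (c*c) powr \<alpha>"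
  proof -
    have "sqrt (((c*c) powr \<alpha>)^2 / 4) = (c*c) powr \<alpha> / 2"
      by (simp add: real_sqrt_divide)
    thus ?thesis by simp
  qed
  ultimately show ?thesis by simp
qed


lemma lim_Psi:
  fixes r :: real assumes r0: "r > 0"
  shows "((\<lambda>d. Psi \<alpha> c s (d powr r)) \<longlongrightarrow> Psi \<alpha> c s 0) (at_right 0)"
proof -
  have ev: "eventually (\<lambda>d. d \<ge> 0) (at_right (0::real))" using eventually_at_right_less[of "0::real"] by (auto elim: eventually_mono)
  have z: "((\<lambda>d::real. d powr r) \<longlongrightarrow> 0) (at_right 0)"
  proof -
    have "((\<lambda>d::real. d powr r) \<longlongrightarrow> 0 powr r) (at_right 0)"
      by (intro tendsto_intros) (use r0 ev in auto)
    thus ?thesis by simp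
  qed
  show ?thesis unfolding Psi_def lp_def N1_def N2_def N3_def
    by (intro tendsto_intros z) simp_all
qed

end


lemma choose_u:
  fixes \<alpha> \<rho> :: real
  assumes "0 < \<alpha>" "\<alpha> < 1" "0 < \<rho>" "\<rho> < \<alpha> * (1 - \<alpha>)"
  defines "u \<equiv> (1 - \<rho> / (\<alpha> * (1 - \<alpha>))) / 2"
  shows "0 < u" "u < 1" "(1 - u) powr \<rho> > 1/2 + sqrt (1/4 - \<alpha> * (1 - \<alpha>) * u)"
proof -
  define \<beta> where "\<beta> = \<alpha> * (1 - \<alpha>)"
  have b0: "\<beta> > 0" using assms by (simp add: \<beta>_def)
  have b4: "\<beta> \<le> 1/4"
  proof -
    have "1/4 - \<beta> = (\<alpha> - 1/2)^2" by (simp add: \<beta>_def power2_eq_square algebra_simps)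
    moreover have "(\<alpha> - 1/2)^2 \<ge> 0" by simp
    ultimately show ?thesis by linarith
  qed
  have rb: "\<rho> / \<beta> < 1" using assms b0 by (simp add: \<beta>_def)
  have rb0: "\<rho> / \<beta> > 0" using assms b0 by simp
  have u: "u = (1 - \<rho> / \<beta>) / 2" by (simp add: u_def \<beta>_def)
  show u0: "0 < u" using rb u by simp
  show u1: "u < 1" using rb0 u by simp
  have uh: "u < 1/2" using rb0 u by simp
  have "\<beta> * u \<le> 1/4 * u" by (rule mult_right_mono) (use b4 u0 in auto)
  hence bu: "\<beta> * u \<le> 1/8" using uh by simp
  have sq: "sqrt (1/4 - \<beta> * u) \<le> 1/2 - \<beta> * u"
  proof -
    have "sqrt (1/4 - \<beta> * u) \<le> sqrt ((1/2 - \<beta> * u)^2)"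
      by (rule real_sqrt_le_mono) (use b0 u0 in \<open>simp add: power2_eq_square algebra_simps\<close>)
    also have "\<dots> = 1/2 - \<beta> * u" using bu by simp
    finally show ?thesis .
  qed
  hence R: "1/2 + sqrt (1/4 - \<beta> * u) \<le> 1 - \<beta> * u" by simp
  have ln1: "ln (1 - u) \<ge> - (u / (1 - u))"
  proof -
    have "ln (1 / (1 - u)) \<le> 1 / (1 - u) - 1" using u1 by (intro ln_le_minus_one) simp
    moreover have "ln (1 / (1 - u)) = - ln (1 - u)" using u1 by (simp add: ln_div)
    moreover have "1 / (1 - u) - 1 = u / (1 - u)" using u1 by (simp add: field_simps)
    ultimately show ?thesis by simp
  qed
  have "(1 - u) powr \<rho> = exp (\<rho> * ln (1 - u))" using u1 by (simp add: powr_def)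
  also have "\<dots> \<ge> 1 + \<rho> * ln (1 - u)" by (rule exp_ge_add_one_self)
  finally have L1: "(1 - u) powr \<rho> \<ge> 1 + \<rho> * ln (1 - u)" .
  have "\<rho> * ln (1 - u) \<ge> \<rho> * (- (u / (1 - u)))" by (rule mult_left_mono[OF ln1]) (use assms(3) in simp)
  hence L2: "(1 - u) powr \<rho> \<ge> 1 - \<rho> * u / (1 - u)" using L1 by simp
  have key: "\<rho> * u / (1 - u) < \<beta> * u"
  proof -
    have "\<rho> < \<beta> * (1 - u)"
    proof -
      have "\<beta> * (1 - u) = \<beta> * (1 + \<rho> / \<beta>) / 2" unfolding u by (simp add: field_simps)
      also have "\<dots> = (\<beta> + \<rho>) / 2" using b0 by (simp add: field_simps)
      finally show ?thesis using assms(4) by (simp add: \<beta>_def)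
    qed
    hence "\<rho> * u < \<beta> * (1 - u) * u" using u0 by simp
    thus ?thesis using u1 by (simp add: field_simps)
  qed
  show "(1 - u) powr \<rho> > 1/2 + sqrt (1/4 - \<alpha> * (1 - \<alpha>) * u)"
    using R L2 key unfolding \<beta>_def by linarith
qed


lemma counterexample:
  fixes \<alpha> p q :: real
  assumes \<alpha>0: "0 < \<alpha>" and \<alpha>1: "\<alpha> < 1" and p0: "0 < p" and q0: "0 < q" and lt: "q / p < 1 - \<alpha>"
  shows "\<exists>A B. A \<in> carrier_mat 2 2 \<and> B \<in> carrier_mat 2 2 \<and> pos_def_mat A \<and> pos_def_mat B \<and>
     eig 1 (mat_pmean \<alpha> q A B) < eig 1 (SG_tilde \<alpha> p A B) \<and> dim_row (SG_tilde \<alpha> p A B) = 2"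
proof -
  define \<rho> where "\<rho> = \<alpha> * (q / p)"
  have \<rho>0: "0 < \<rho>" using \<alpha>0 p0 q0 by (simp add: \<rho>_def)
  have \<rho>1: "\<rho> < \<alpha> * (1 - \<alpha>)" unfolding \<rho>_def by (rule mult_strict_left_mono[OF lt \<alpha>0])
  define u where "u = (1 - \<rho> / (\<alpha> * (1 - \<alpha>))) / 2"
  have u0: "0 < u" and u1: "u < 1" and ineq: "(1 - u) powr \<rho> > 1/2 + sqrt (1/4 - \<alpha> * (1 - \<alpha>) * u)"
    using choose_u[OF \<alpha>0 \<alpha>1 \<rho>0 \<rho>1] unfolding u_def by auto
  define c where "c = sqrt (1 - u)"
  define s where "s = sqrt u"
  have c0: "c > 0" using u1 by (simp add: c_def)
  have s0: "s > 0" using u0 by (simp add: s_def)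
  have cc: "c * c = 1 - u" using u1 by (simp add: c_def)
  have ss: "s * s = u" using u0 by (simp add: s_def)
  have cs: "c * c + s * s = 1" using cc ss by simp
  define L where "L = Psi \<alpha> c s 0"
  have "L > 0 \<and> L = 1/2 + sqrt (1/4 - \<alpha> * (1 - \<alpha>) * u)"
  proof -
    have "N1 \<alpha> c s 0 + N3 \<alpha> c s 0 = 1 - \<alpha> + \<alpha> * (c*c + s*s)" unfolding N1_def N3_def by (simp add: algebra_simps)
    hence tr: "N1 \<alpha> c s 0 + N3 \<alpha> c s 0 = 1" using cs by simp
    have "N1 \<alpha> c s 0 * N3 \<alpha> c s 0 - N2 \<alpha> c s 0 * N2 \<alpha> c s 0 = (1 - \<alpha>) * \<alpha> * (s * s)"
      unfolding N1_def N2_def N3_def by (simp add: algebra_simps)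
    hence det: "N1 \<alpha> c s 0 * N3 \<alpha> c s 0 - N2 \<alpha> c s 0 * N2 \<alpha> c s 0 = \<alpha> * (1 - \<alpha>) * u"
      using ss by simp
    have "lm (N1 \<alpha> c s 0) (N2 \<alpha> c s 0) (N3 \<alpha> c s 0) > 0"
      by (rule lm_pos) (use tr det \<alpha>0 \<alpha>1 u0 in auto)
    hence "L > 0" unfolding L_def Psi_def using lm_le_lp by (smt (verit))
    moreover have "L = 1/2 + sqrt (1/4 - \<alpha> * (1 - \<alpha>) * u)" unfolding L_def Psi_def lp_alt tr det by simp
    ultimately show ?thesis by blast
  qed
  hence Lpos: "L > 0" and L: "L = 1/2 + sqrt (1/4 - \<alpha> * (1 - \<alpha>) * u)" by auto
  have Llt: "L < (1 - u) powr \<rho>" using ineq L by simp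
  define a where "a = ((c*c) powr \<alpha>) powr (1/p)"
  define b where "b = L powr (1/q)"
  have "b < ((1 - u) powr \<rho>) powr (1/q)" unfolding b_def
    by (rule powr_less_mono2) (use q0 Lpos Llt in auto)
  also have "((1 - u) powr \<rho>) powr (1/q) = ((c*c) powr \<alpha>) powr (1/p)"
    unfolding cc \<rho>_def using p0 q0 by (simp add: powr_powr)
  finally have ab: "b < a" unfolding a_def .
  have fa: "((\<lambda>d. Phi \<alpha> c s d powr (1/p)) \<longlongrightarrow> a) (at_right 0)" unfolding a_def
    by (rule tendsto_powr[OF lim_Phi[OF \<alpha>0 \<alpha>1 c0 s0 cs]]) (use c0 in auto)
  have gb: "((\<lambda>d. Psi \<alpha> c s (d powr (q/p)) powr (1/q)) \<longlongrightarrow> b) (at_right 0)" unfolding b_def L_def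
    by (rule tendsto_powr[OF lim_Psi[OF \<alpha>0 \<alpha>1 c0 s0 cs]]) (use p0 q0 Lpos L_def in auto)
  have "((\<lambda>d. Phi \<alpha> c s d powr (1/p) - Psi \<alpha> c s (d powr (q/p)) powr (1/q)) \<longlongrightarrow> a - b) (at_right 0)"
    by (rule tendsto_diff[OF fa gb])
  hence "eventually (\<lambda>d. 0 < Phi \<alpha> c s d powr (1/p) - Psi \<alpha> c s (d powr (q/p)) powr (1/q)) (at_right 0)"
    using ab by (intro order_tendstoD(1)) auto
  hence "eventually (\<lambda>d. (0 < d \<and> d < 1) \<and> 0 < Phi \<alpha> c s d powr (1/p) - Psi \<alpha> c s (d powr (q/p)) powr (1/q)) (at_right 0)"
    using ev01 by (rule eventually_conj[rotated])
  then obtain bb where bb: "bb > 0" "\<And>y. y > 0 \<Longrightarrow> y < bb \<Longrightarrow> (0 < y \<and> y < 1) \<and> 0 < Phi \<alpha> c s y powr (1/p) - Psi \<alpha> c s (y powr (q/p)) powr (1/q)"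
    unfolding eventually_at_right_field by auto
  define d where "d = bb / 2"
  have dpos: "d > 0" "d < bb" using bb(1) by (simp_all add: d_def)
  have "(0 < d \<and> d < 1) \<and> 0 < Phi \<alpha> c s d powr (1/p) - Psi \<alpha> c s (d powr (q/p)) powr (1/q)"
    by (rule bb(2)[OF dpos])
  hence d0: "0 < d" and d1: "d < 1" and dd: "Psi \<alpha> c s (d powr (q/p)) powr (1/q) < Phi \<alpha> c s d powr (1/p)" by auto
  note SG = SG_eig[OF \<alpha>0 \<alpha>1 c0 s0 cs d0 d1 p0]
  note PM = PM_eig[OF \<alpha>0 \<alpha>1 c0 s0 cs d0 d1 p0 q0]
  note PD = AB_pd[OF \<alpha>0 \<alpha>1 c0 s0 cs d0 d1 p0]
  have car: "Qm 1 0 (d powr (1/p)) \<in> carrier_mat 2 2" "Qm c s (d powr (1/p)) \<in> carrier_mat 2 2"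
    unfolding Qm_def by (rule rm2_carrier)+
  show ?thesis
    apply (rule exI[of _ "Qm 1 0 (d powr (1/p))"], rule exI[of _ "Qm c s (d powr (1/p))"])
    unfolding SG(1) SG(2) PM using car PD dd by blast
qed


theorem theorem4p35:
  fixes \<alpha> p q :: real
  assumes "0 < \<alpha>" and "\<alpha> < 1" and "0 < p" and "0 < q"
  shows "((\<forall>A B. A \<in> carrier_mat 2 2 \<longrightarrow> B \<in> carrier_mat 2 2 \<longrightarrow> pos_def_mat A \<longrightarrow> pos_def_mat B \<longrightarrow>
            eig 1 (SG_tilde \<alpha> p A B) \<le> eig 1 (mat_pmean \<alpha> q A B)) \<longrightarrow> q / p \<ge> 1 - \<alpha>) \<and>
         ((\<forall>A B. A \<in> carrier_mat 2 2 \<longrightarrow> B \<in> carrier_mat 2 2 \<longrightarrow> pos_def_mat A \<longrightarrow> pos_def_mat B \<longrightarrow>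
            weak_maj (SG_tilde \<alpha> p A B) (mat_pmean \<alpha> q A B)) \<longrightarrow> q / p \<ge> 1 - \<alpha>)"
proof (intro conjI impI)
  assume H: "\<forall>A B. A \<in> carrier_mat 2 2 \<longrightarrow> B \<in> carrier_mat 2 2 \<longrightarrow> pos_def_mat A \<longrightarrow> pos_def_mat B \<longrightarrow>
            eig 1 (SG_tilde \<alpha> p A B) \<le> eig 1 (mat_pmean \<alpha> q A B)"
  show "q / p \<ge> 1 - \<alpha>"
  proof (rule ccontr)
    assume "\<not> q / p \<ge> 1 - \<alpha>"
    hence "q / p < 1 - \<alpha>" by simp
    from counterexample[OF assms this] obtain A B where AB: "A \<in> carrier_mat 2 2" "B \<in> carrier_mat 2 2"
      "pos_def_mat A" "pos_def_mat B" "eig 1 (mat_pmean \<alpha> q A B) < eig 1 (SG_tilde \<alpha> p A B)" by blast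
    from H AB(1-4) have "eig 1 (SG_tilde \<alpha> p A B) \<le> eig 1 (mat_pmean \<alpha> q A B)" by blast
    with AB(5) show False by simp
  qed
next
  assume H: "\<forall>A B. A \<in> carrier_mat 2 2 \<longrightarrow> B \<in> carrier_mat 2 2 \<longrightarrow> pos_def_mat A \<longrightarrow> pos_def_mat B \<longrightarrow>
            weak_maj (SG_tilde \<alpha> p A B) (mat_pmean \<alpha> q A B)"
  show "q / p \<ge> 1 - \<alpha>"
  proof (rule ccontr)
    assume "\<not> q / p \<ge> 1 - \<alpha>"
    hence "q / p < 1 - \<alpha>" by simp
    from counterexample[OF assms this] obtain A B where AB: "A \<in> carrier_mat 2 2" "B \<in> carrier_mat 2 2"
      "pos_def_mat A" "pos_def_mat B" "eig 1 (mat_pmean \<alpha> q A B) < eig 1 (SG_tilde \<alpha> p A B)"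
      "dim_row (SG_tilde \<alpha> p A B) = 2" by blast
    from H AB(1-4) have "weak_maj (SG_tilde \<alpha> p A B) (mat_pmean \<alpha> q A B)" by blast
    hence W: "\<forall>k \<in> {1..dim_row (SG_tilde \<alpha> p A B)}. (\<Sum>i=1..k. eig i (SG_tilde \<alpha> p A B)) \<le> (\<Sum>i=1..k. eig i (mat_pmean \<alpha> q A B))"
      unfolding weak_maj_def .
    have k1: "(1::nat) \<in> {1..dim_row (SG_tilde \<alpha> p A B)}" using AB(6) by simp
    have "(\<Sum>i=1..1. eig i (SG_tilde \<alpha> p A B)) \<le> (\<Sum>i=1..1. eig i (mat_pmean \<alpha> q A B))"
      using bspec[OF W k1] .
    hence "eig 1 (SG_tilde \<alpha> p A B) \<le> eig 1 (mat_pmean \<alpha> q A B)" by simp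
    with AB(5) show False by simp
  qed
qed

end
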